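(* Let $(P_n)_{n\ge0}$ be monic polynomials with $\deg P_n=n$, $P_n(x)=\sum_{i=0}^nb_{n,i}x^i$, let $(\gamma_n)_{n\ge1}$ be nonzero complex numbers, and let $P_0^{(1)}=P_0$, $P_n^{(1)}=P_n+\gamma_nP_{n-1}$ ($n\ge1$), with coefficients $P_n^{(1)}(x)=\sum_{i=0}^nb^{(1)}_{n,i}x^i$. (In the paper's setting the $P_n$ are the eigenpolynomials of a differential operator as in the standing assumptions below.) For a family $(Q_m)$ of monic polynomials, $\deg Q_m=m$, with coefficients $q_{m,l}$, and integers $n\ge1$, $1\le k\le n$, $s\ge1$, let $\Delta_{k,n,s}(Q)$ be the determinant of the $k\times k$ matrix with first row entries $\left[\binom{n-k}{s-1}+\cdots+\binom{n-k+c-1}{s-1}\right]q_{n-k+c,\,n-k}$ ($1\le c\le k$) and, for $2\le\rho\le k$, entries $q_{n-k+c,\;n-k+\rho-1}$. Write $\Delta_{k,n,s}=\Delta_{k,n,s}(P)$ and $\Delta^{(1)}_{k,n,s}=\Delta_{k,n,s}(P^{(1)})$. Then $$\Delta^{(1)}_{k,n,s}=\Delta_{k,n,s}+\sum_{j=0}^{k-1}(-1)^j\binom{n-k+j}{s-1}b_{n-k+j,\,n-k}\left[\sum_{r=1}^{k-j}\gamma_{n-k+j+1}\cdots\gamma_{n-k+j+r}\,E_{k,n,j+r-1}\right],$$ where for $0\le t\le k-1$, $E_{k,n,t}$ is the determinant of the $(k-t-1)\times(k-t-1)$ matrix with $(\rho,c)$ entry $b_{n-k+t+1+c,\;n-k+t+\rho}$,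 and $E_{k,n,k-1}=1$.
   Context: Conventions: $q_{m,m}=1$, $q_{m,l}=0$ for $l>m$ (likewise for $b$, $b^{(1)}$); $\binom{m}{s-1}=0$ for $m<s-1$. Standing assumptions of the paper: $(P_n)$ are monic eigenpolynomials of $L=\sum_{i=0}^Na_i(x)\partial_x^i$ ($\deg a_i\le i$, $a_0\equiv0$) with eigenvalues $\lambda_n$, $\lambda_0=0$, $\lambda_n\notin\{0,\lambda_1,\dots,\lambda_{n-1}\}$. *)

theory Defs
  imports Complex_Main "HOL-Computational_Algebra.Polynomial" "Jordan_Normal_Form.Determinant"
begin

definition P1 :: "(nat \<Rightarrow> complex poly) \<Rightarrow> (nat \<Rightarrow> complex) \<Rightarrow> nat \<Rightarrow> complex poly" where
  "P1 P \<gamma> n = (if n = 0 then P 0 else P n + smult (\<gamma> n) (P (n - 1)))"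

text \<open>Delta_{k,n,s}(Q): k x k determinant; row index rho = i+1, column index c = j+1
  (0-based i, j).\<close>
definition Delta :: "(nat \<Rightarrow> complex poly) \<Rightarrow> nat \<Rightarrow> nat \<Rightarrow> nat \<Rightarrow> complex" where
  "Delta Q k n s = det (mat k k (\<lambda>(i, j).
      if i = 0 then (\<Sum>c'\<le>j. of_nat ((n - k + c') choose (s - 1))) * coeff (Q (n - k + (j + 1))) (n - k)
      else coeff (Q (n - k + (j + 1))) (n - k + (i + 1) - 1)))"

definition E :: "(nat \<Rightarrow> complex poly) \<Rightarrow> nat \<Rightarrow> nat \<Rightarrow> nat \<Rightarrow> complex" where
  "E P k n t = (if t = k - 1 then 1 else
      det (mat (k - t - 1) (k - t - 1) (\<lambda>(i, j).
        coeff (P (n - k + t + 1 + (j + 1))) (n - k + t + (i + 1)))))"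

end

theory Submission
  imports Defs
begin

lemma cof_lemma:
  fixes g :: "nat \<Rightarrow> nat \<Rightarrow> complex"
  assumes "c < K"
    and "\<And>i j. 1 \<le> i \<Longrightarrow> j + 1 < i \<Longrightarrow> g i j = 0"
    and "\<And>i. 1 \<le> i \<Longrightarrow> g i (i - 1) = 1"
    and "\<And>j. g 0 j = (if j = c then 1 else 0)"
  shows "det (mat K K (\<lambda>(i,j). g i j)) = (-1)^c * det (mat (K-c-1) (K-c-1) (\<lambda>(i,j). g (c+1+i) (c+1+j)))"
  using assms
proof (induction c arbitrary: K g)
  case 0
  have "det (mat K K (\<lambda>(i,j). g i j)) = (\<Sum>j<K. mat K K (\<lambda>(i,j). g i j) $$ (0,j) * cofactor (mat K K (\<lambda>(i,j). g i j)) 0 j)"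
    by (rule laplace_expansion_row) (use 0 in auto)
  also have "\<dots> = (\<Sum>j<K. if j = 0 then cofactor (mat K K (\<lambda>(i,j). g i j)) 0 0 else 0)"
    by (rule sum.cong) (use 0 in auto)
  also have "\<dots> = cofactor (mat K K (\<lambda>(i,j). g i j)) 0 0" using 0 by simp
  also have "\<dots> = det (mat_delete (mat K K (\<lambda>(i,j). g i j)) 0 0)" by (simp add: cofactor_def)
  also have "mat_delete (mat K K (\<lambda>(i,j). g i j)) 0 0 = mat (K-0-1) (K-0-1) (\<lambda>(i,j). g (0+1+i) (0+1+j))"
    by (rule eq_matI) (auto simp: mat_delete_def)
  finally show ?case by simp
next
  case (Suc c)
  define A where "A = mat K K (\<lambda>(i,j). g i j)"
  have "det A = (\<Sum>i<K. A $$ (i,0) * cofactor A i 0)"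
    by (rule laplace_expansion_column) (use Suc in \<open>auto simp: A_def\<close>)
  also have "\<dots> = (\<Sum>i<K. if i = 1 then cofactor A 1 0 else 0)"
  proof (rule sum.cong)
    fix i assume "i \<in> {..<K}"
    then show "A $$ (i,0) * cofactor A i 0 = (if i = 1 then cofactor A 1 0 else 0)"
      using Suc.prems(2)[of i 0] Suc.prems(3)[of 1] Suc.prems(4)[of 0]
      by (cases "i = 0"; cases "i = 1") (auto simp: A_def)
  qed simp
  also have "\<dots> = cofactor A 1 0" using Suc by simp
  also have "\<dots> = - det (mat_delete A 1 0)" by (simp add: cofactor_def)
  also have "mat_delete A 1 0 = mat (K-1) (K-1) (\<lambda>(i,j). (\<lambda>i j. if i = 0 then g 0 (j+1) else g (i+1) (j+1)) i j)"
    by (rule eq_matI) (auto simp: mat_delete_def A_def)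
  also have "det \<dots> = (-1)^c * det (mat (K-1-c-1) (K-1-c-1) (\<lambda>(i,j). g (c+2+i) (c+2+j)))"
  proof -
    define g' where "g' = (\<lambda>i j. if i = 0 then g 0 (j+1) else g (i+1) (j+1))"
    have h1: "c < K - 1" using Suc.prems(1) by simp
    have h2: "\<And>i j. 1 \<le> i \<Longrightarrow> j + 1 < i \<Longrightarrow> g' i j = 0"
      unfolding g'_def using Suc.prems(2) by simp
    have h3: "\<And>i. 1 \<le> i \<Longrightarrow> g' i (i - 1) = 1"
    proof -
      fix i :: nat assume "1 \<le> i"
      then have "g (i+1) (i+1-1) = 1" using Suc.prems(3)[of "i+1"] by simp
      then show "g' i (i - 1) = 1" unfolding g'_def using \<open>1 \<le> i\<close> by simp
    qed
    have h4: "\<And>j. g' 0 j = (if j = c then 1 else 0)"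
      unfolding g'_def using Suc.prems(4) by simp
    have "det (mat (K-1) (K-1) (\<lambda>(i,j). g' i j)) = (-1)^c * det (mat (K-1-c-1) (K-1-c-1) (\<lambda>(i,j). g' (c+1+i) (c+1+j)))"
      by (rule Suc.IH[OF h1 h2 h3 h4])
    also have "mat (K-1-c-1) (K-1-c-1) (\<lambda>(i,j). g' (c+1+i) (c+1+j)) = mat (K-1-c-1) (K-1-c-1) (\<lambda>(i,j). g (c+2+i) (c+2+j))"
      by (rule eq_matI) (auto simp: g'_def)
    finally show ?thesis unfolding g'_def .
  qed
  finally show ?case unfolding A_def by (simp add: numeral_2_eq_2 add.commute add.left_commute)
qed


fun zf :: "(nat \<Rightarrow> complex) \<Rightarrow> (nat \<Rightarrow> complex) \<Rightarrow> nat \<Rightarrow> complex" where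
  "zf b g 0 = g 0 * b 0"
| "zf b g (Suc j) = g (Suc j) * (b (Suc j) - zf b g j)"

lemma zf_closed:
  "zf b g c = (\<Sum>j\<le>c. (-1)^(c-j) * b j * (\<Prod>i=1..Suc (c-j). g (j+i-1)))"
proof (induction c)
  case 0
  then show ?case by simp
next
  case (Suc c)
  have "zf b g (Suc c) = g (Suc c) * b (Suc c) - g (Suc c) * zf b g c" by (simp add: algebra_simps)
  also have "g (Suc c) * zf b g c = (\<Sum>j\<le>c. - ((-1)^(Suc c-j) * b j * (\<Prod>i=1..Suc (Suc c-j). g (j+i-1))))"
    unfolding Suc sum_distrib_left
  proof (rule sum.cong)
    fix j assume "j \<in> {..c}"
    then have j: "j \<le> c" by simp
    then have e1: "Suc c - j = Suc (c - j)" by simp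
    have "(\<Prod>i=1..Suc (Suc (c-j)). g (j+i-1)) = (\<Prod>i=1..Suc (c-j). g (j+i-1)) * g (Suc c)"
      using j by (simp add: prod.cl_ivl_Suc del: prod.op_ivl_Suc)
    then show "g (Suc c) * ((-1)^(c-j) * b j * (\<Prod>i=1..Suc (c-j). g (j+i-1))) =
       - ((-1)^(Suc c-j) * b j * (\<Prod>i=1..Suc (Suc c-j). g (j+i-1)))"
      unfolding e1 using j by (simp add: algebra_simps)
  qed simp
  also have "g (Suc c) * b (Suc c) - (\<Sum>j\<le>c. - ((-1)^(Suc c-j) * b j * (\<Prod>i=1..Suc (Suc c-j). g (j+i-1))))
    = (\<Sum>j\<le>Suc c. (-1)^(Suc c-j) * b j * (\<Prod>i=1..Suc (Suc c-j). g (j+i-1)))"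
    by (simp add: sum.atMost_Suc sum_negf)
  finally show ?case .
qed


lemma swap_tri:
  fixes F :: "nat \<Rightarrow> nat \<Rightarrow> 'a::comm_monoid_add"
  shows "(\<Sum>c<k. \<Sum>j\<le>c. F j c) = (\<Sum>j<k. \<Sum>c\<in>{j..<k}. F j c)"
proof (induction k)
  case 0 then show ?case by simp
next
  case (Suc k)
  have "(\<Sum>j<Suc k. \<Sum>c\<in>{j..<Suc k}. F j c) = (\<Sum>j<Suc k. (\<Sum>c\<in>{j..<k}. F j c) + F j k)"
    by (rule sum.cong) auto
  also have "\<dots> = (\<Sum>j<k. \<Sum>c\<in>{j..<k}. F j c) + (\<Sum>j\<le>k. F j k)"
    by (simp add: sum.distrib lessThan_Suc_atMost[symmetric])
  finally show ?case using Suc by simp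
qed

lemma reidx:
  fixes H :: "nat \<Rightarrow> 'a::comm_monoid_add"
  shows "(\<Sum>c\<in>{j..<k}. H c) = (\<Sum>r=1..k-j. H (j+r-1))"
  by (rule sum.reindex_bij_witness[where i="\<lambda>r. j + r - 1" and j="\<lambda>c. c - j + 1"]) auto

theorem lemma4:
  fixes P :: "nat \<Rightarrow> complex poly" and \<gamma> :: "nat \<Rightarrow> complex" and n k s :: nat
  assumes monic: "\<And>m. lead_coeff (P m) = 1"
    and deg: "\<And>m. degree (P m) = m"
    and gamma_nz: "\<And>m. m \<ge> 1 \<Longrightarrow> \<gamma> m \<noteq> 0"
    and n: "n \<ge> 1" and k: "1 \<le> k" "k \<le> n" and s: "s \<ge> 1"
  shows "Delta (P1 P \<gamma>) k n s =
     Delta P k n s +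
     (\<Sum>j<k. (-1) ^ j * of_nat ((n - k + j) choose (s - 1)) * coeff (P (n - k + j)) (n - k) *
        (\<Sum>r = 1..k - j. (\<Prod>i = 1..r. \<gamma> (n - k + j + i)) * E P k n (j + r - 1)))"
proof -
  define m where "m = n - k"
  define S where "S = (\<lambda>j. (\<Sum>c'\<le>j. of_nat ((n - k + c') choose (s - 1))) :: complex)"
  define fQ where "fQ = (\<lambda>Q. (\<lambda>(i, j).
      if i = 0 then S j * coeff (Q (m + (j + 1))) m
      else coeff (Q (m + (j + 1))) (m + i)) :: nat \<times> nat \<Rightarrow> complex)"
  have DeltaQ: "Delta Q k n s = det (mat k k (fQ Q))" for Q
    unfolding Delta_def fQ_def S_def m_def
    by (rule arg_cong[where f = det], rule eq_matI) auto
  have c0: "coeff (P a) b = 0" if "a < b" for a b using deg[of a] that by (simp add: coeff_eq_0)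
  have c1: "coeff (P a) a = 1" for a using monic[of a] deg[of a] by simp
  define \<beta> where "\<beta> = (\<lambda>j. of_nat ((m + j) choose (s - 1)) * coeff (P (m + j)) m :: complex)"
  define g where "g = (\<lambda>j. \<gamma> (m + j + 1))"
  define z where "z = zf \<beta> g"
  define A where "A = mat k k (fQ P)"
  define Z where "Z = mat k k (\<lambda>(i,j). if i = 0 then fQ P (0, j) + z j else fQ P (i, j))"
  define T where "T = mat k k (\<lambda>(i,j). if i = j then 1 else if j = i + 1 then g j else 0)"
  have A: "A \<in> carrier_mat k k" and Zc: "Z \<in> carrier_mat k k" and Tc: "T \<in> carrier_mat k k"
    by (auto simp: A_def Z_def T_def)
  have ZT: "mat k k (fQ (P1 P \<gamma>)) = Z * T"
  proof (rule eq_matI)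
    fix i j assume i: "i < dim_row (Z * T)" and j: "j < dim_col (Z * T)"
    then have ik: "i < k" and jk: "j < k" using Zc Tc by auto
    have "(Z * T) $$ (i, j) = (\<Sum>l<k. Z $$ (i,l) * T $$ (l,j))"
      using ik jk Zc Tc by (simp add: scalar_prod_def lessThan_atLeast0)
    also have "\<dots> = (\<Sum>l<k. (if l = j then Z $$ (i,l) else 0) + (if l + 1 = j then g j * Z $$ (i,l) else 0))"
      by (rule sum.cong) (auto simp: T_def jk)
    also have "\<dots> = Z $$ (i,j) + (if j > 0 then g j * Z $$ (i, j - 1) else 0)"
    proof -
      have "(\<Sum>l<k. (if l + 1 = j then g j * Z $$ (i,l) else 0)) = (\<Sum>l<k. (if l = j - 1 then (if j > 0 then g j * Z $$ (i,l) else 0) else 0))"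
        by (rule sum.cong) auto
      also have "\<dots> = (if j > 0 then g j * Z $$ (i, j - 1) else 0)"
        using jk by (simp add: sum.delta)
      finally show ?thesis using jk by (simp add: sum.distrib sum.delta)
    qed
    also have "\<dots> = fQ (P1 P \<gamma>) (i, j)"
    proof (cases "i = 0")
      case True
      show ?thesis
      proof (cases j)
        case 0
        have "S 0 = of_nat (m choose (s - 1))" by (simp add: S_def m_def)
        then show ?thesis using True 0 ik jk
          by (simp add: Z_def fQ_def z_def \<beta>_def g_def P1_def c1 algebra_simps)
      next
        case (Suc j')
        have "S (Suc j') = S j' + of_nat ((m + Suc j') choose (s - 1))" by (simp add: S_def m_def)
        then show ?thesis using True Suc ik jk
          by (simp add: Z_def fQ_def z_def \<beta>_def g_def P1_def algebra_simps)
      qed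
    next
      case False
      then show ?thesis using ik jk c0[of m "m+i"]
        by (cases j) (auto simp: Z_def fQ_def g_def P1_def algebra_simps)
    qed
    finally show "mat k k (fQ (P1 P \<gamma>)) $$ (i, j) = (Z * T) $$ (i, j)" using ik jk by simp
  qed (use Zc Tc in auto)
  have detT: "det T = 1"
  proof -
    have "upper_triangular T" by (auto simp: upper_triangular_def T_def)
    then have "det T = prod_list (diag_mat T)" using det_upper_triangular Tc by blast
    also have "diag_mat T = replicate k 1"
      by (rule nth_equalityI) (auto simp: diag_mat_def T_def)
    finally show ?thesis by simp
  qed
  have cofZ: "cofactor Z 0 j = cofactor A 0 j" for j
    unfolding cofactor_def
    by (rule arg_cong[where f = "\<lambda>M. _ * det M"], rule eq_matI) (auto simp: mat_delete_def Z_def A_def)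
  have detZ: "det Z = det A + (\<Sum>j<k. z j * cofactor A 0 j)"
  proof -
    have "det Z = (\<Sum>j<k. Z $$ (0,j) * cofactor Z 0 j)"
      by (rule laplace_expansion_row[OF Zc]) (use k in auto)
    also have "\<dots> = (\<Sum>j<k. A $$ (0,j) * cofactor A 0 j + z j * cofactor A 0 j)"
    proof (rule sum.cong)
      fix j assume "j \<in> {..<k}"
      then have "Z $$ (0,j) = A $$ (0,j) + z j" by (simp add: Z_def A_def)
      then show "Z $$ (0,j) * cofactor Z 0 j = A $$ (0,j) * cofactor A 0 j + z j * cofactor A 0 j"
        by (simp add: cofZ algebra_simps)
    qed simp
    also have "\<dots> = det A + (\<Sum>j<k. z j * cofactor A 0 j)"
      using laplace_expansion_row[OF A, of 0] k by (simp add: sum.distrib)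
    finally show ?thesis .
  qed
  have cofA: "cofactor A 0 c = (-1)^c * E P k n c" if ck: "c < k" for c
  proof -
    define B where "B = mat k k (\<lambda>(i,j). (\<lambda>i j. if i = 0 then (if j = c then 1 else 0) else fQ P (i, j)) i j)"
    have Bc: "B \<in> carrier_mat k k" by (simp add: B_def)
    have cofB: "cofactor B 0 j = cofactor A 0 j" for j
      unfolding cofactor_def
      by (rule arg_cong[where f = "\<lambda>M. _ * det M"], rule eq_matI) (auto simp: mat_delete_def B_def A_def)
    have "det B = (\<Sum>j<k. B $$ (0,j) * cofactor B 0 j)"
      by (rule laplace_expansion_row[OF Bc]) (use k in auto)
    also have "\<dots> = (\<Sum>j<k. if j = c then cofactor A 0 c else 0)"
    proof (rule sum.cong)
      fix j assume "j \<in> {..<k}"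
      then have "B $$ (0,j) = (if j = c then 1 else 0)" by (simp add: B_def)
      then show "B $$ (0,j) * cofactor B 0 j = (if j = c then cofactor A 0 c else 0)"
        by (simp add: cofB)
    qed simp
    also have "\<dots> = cofactor A 0 c" using ck by simp
    finally have 1: "det B = cofactor A 0 c" .
    have "det B = (-1)^c * det (mat (k-c-1) (k-c-1) (\<lambda>(i,j). (\<lambda>i j. if i = 0 then (if j = c then 1 else 0) else fQ P (i, j)) (c+1+i) (c+1+j)))"
      unfolding B_def
    proof (rule cof_lemma[OF ck])
      fix i j :: nat assume "1 \<le> i" "j + 1 < i"
      then show "(if i = 0 then (if j = c then 1 else 0) else fQ P (i, j)) = 0"
        by (auto simp: fQ_def c0)
    next
      fix i :: nat assume "1 \<le> i"
      then show "(if i = 0 then (if i - 1 = c then 1 else 0) else fQ P (i, i - 1)) = 1"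
        by (auto simp: fQ_def c1)
    qed simp
    also have "det (mat (k-c-1) (k-c-1) (\<lambda>(i,j). (\<lambda>i j. if i = 0 then (if j = c then 1 else 0) else fQ P (i, j)) (c+1+i) (c+1+j))) = E P k n c"
    proof (cases "c = k - 1")
      case True
      then show ?thesis by (simp add: E_def)
    next
      case False
      then show ?thesis unfolding E_def
        by (simp, intro arg_cong[where f = det] eq_matI) (auto simp: fQ_def m_def algebra_simps)
    qed
    finally show ?thesis using 1 by simp
  qed
  have main: "Delta (P1 P \<gamma>) k n s = Delta P k n s + (\<Sum>c<k. z c * ((-1)^c * E P k n c))"
  proof -
    have "Delta (P1 P \<gamma>) k n s = det (Z * T)" using DeltaQ ZT by simp
    also have "\<dots> = det Z" using det_mult[OF Zc Tc] detT by simp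
    also have "\<dots> = Delta P k n s + (\<Sum>c<k. z c * ((-1)^c * E P k n c))"
      using detZ cofA DeltaQ[of P] unfolding A_def[symmetric] by simp
    finally show ?thesis .
  qed
  have fin: "(\<Sum>c<k. z c * ((-1)^c * E P k n c)) =
     (\<Sum>j<k. (-1) ^ j * of_nat ((n - k + j) choose (s - 1)) * coeff (P (n - k + j)) (n - k) *
        (\<Sum>r = 1..k - j. (\<Prod>i = 1..r. \<gamma> (n - k + j + i)) * E P k n (j + r - 1)))"
  proof -
    have "(\<Sum>c<k. z c * ((-1)^c * E P k n c)) =
      (\<Sum>c<k. \<Sum>j\<le>c. (-1)^j * \<beta> j * ((\<Prod>i=1..c-j+1. \<gamma> (m+j+i)) * E P k n c))"
    proof (rule sum.cong)
      fix c assume "c \<in> {..<k}"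
      have "z c * ((-1)^c * E P k n c) = (\<Sum>j\<le>c. (-1)^(c-j) * \<beta> j * (\<Prod>i=1..Suc (c-j). g (j+i-1)) * ((-1)^c * E P k n c))"
        unfolding z_def zf_closed sum_distrib_right ..
      also have "\<dots> = (\<Sum>j\<le>c. (-1)^j * \<beta> j * ((\<Prod>i=1..c-j+1. \<gamma> (m+j+i)) * E P k n c))"
      proof (rule sum.cong)
        fix j assume "j \<in> {..c}"
        then have jc: "j \<le> c" by simp
        have pr: "(\<Prod>i=1..Suc (c-j). g (j+i-1)) = (\<Prod>i=1..c-j+1. \<gamma> (m+j+i))"
          by (rule prod.cong) (auto simp: g_def add.assoc)
        have sg: "(-1::complex)^(c-j) * (-1)^c = (-1)^j"
        proof -
          have "(-1::complex)^c = (-1)^(c-j) * (-1)^j" using jc by (simp add: power_add[symmetric])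
          then have "(-1::complex)^(c-j) * (-1)^c = ((-1)^(c-j) * (-1)^(c-j)) * (-1)^j" by simp
          also have "(-1::complex)^(c-j) * (-1)^(c-j) = 1" by (simp add: power_add[symmetric] power_mult[symmetric] mult_2[symmetric])
          finally show ?thesis by simp
        qed
        show "(-1)^(c-j) * \<beta> j * (\<Prod>i=1..Suc (c-j). g (j+i-1)) * ((-1)^c * E P k n c) =
          (-1)^j * \<beta> j * ((\<Prod>i=1..c-j+1. \<gamma> (m+j+i)) * E P k n c)"
          unfolding pr sg[symmetric] by (simp add: algebra_simps)
      qed simp
      finally show "z c * ((-1)^c * E P k n c) = (\<Sum>j\<le>c. (-1)^j * \<beta> j * ((\<Prod>i=1..c-j+1. \<gamma> (m+j+i)) * E P k n c))" .
    qed simp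
    also have "\<dots> = (\<Sum>j<k. \<Sum>c\<in>{j..<k}. (-1)^j * \<beta> j * ((\<Prod>i=1..c-j+1. \<gamma> (m+j+i)) * E P k n c))"
      by (rule swap_tri)
    also have "\<dots> = (\<Sum>j<k. (-1)^j * \<beta> j * (\<Sum>r=1..k-j. (\<Prod>i=1..r. \<gamma> (m+j+i)) * E P k n (j+r-1)))"
    proof (rule sum.cong)
      fix j assume "j \<in> {..<k}"
      have "(\<Sum>c\<in>{j..<k}. (-1)^j * \<beta> j * ((\<Prod>i=1..c-j+1. \<gamma> (m+j+i)) * E P k n c))
        = (-1)^j * \<beta> j * (\<Sum>c\<in>{j..<k}. (\<Prod>i=1..c-j+1. \<gamma> (m+j+i)) * E P k n c)"
        by (simp add: sum_distrib_left)
      also have "(\<Sum>c\<in>{j..<k}. (\<Prod>i=1..c-j+1. \<gamma> (m+j+i)) * E P k n c) = (\<Sum>r=1..k-j. (\<Prod>i=1..r. \<gamma> (m+j+i)) * E P k n (j+r-1))"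
        unfolding reidx by (rule sum.cong) auto
      finally show "(\<Sum>c\<in>{j..<k}. (-1)^j * \<beta> j * ((\<Prod>i=1..c-j+1. \<gamma> (m+j+i)) * E P k n c)) =
         (-1)^j * \<beta> j * (\<Sum>r=1..k-j. (\<Prod>i=1..r. \<gamma> (m+j+i)) * E P k n (j+r-1))" .
    qed simp
    finally show ?thesis by (simp add: \<beta>_def m_def mult.assoc)
  qed
  show ?thesis using main fin by simp
qed

end
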